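(* Let $c,d>0$ with $\frac1c+\frac1d\ge 1$. For $r\in(0,1)$ and $p>0$ define $$\omega(c,d,p,r)=\left(\frac{r^p}{1+r^p}\,F\!\left(c,d;c+d;\frac{r^p}{1+r^p}\right)\right)^{1/p}.$$ Then for each fixed $r\in(0,1)$, $p\mapsto\omega(c,d,p,r)$ is increasing on $(0,\infty)$. In particular, for all $r\in(0,1)$, $$\frac{\sqrt r}{1+\sqrt r}\,F\!\left(c,d;c+d;\frac{\sqrt r}{1+\sqrt r}\right)\le\left(\frac{r}{1+r}\,F\!\left(c,d;c+d;\frac{r}{1+r}\right)\right)^{1/2}.$$
   Context: $F(a,b;c;x)={}_2F_1(a,b;c;x)=\sum_{n\ge0}\frac{(a)_n(b)_n}{(c)_n}\frac{x^n}{n!}$ for $|x|<1$ is the Gaussian hypergeometric function, where $(a)_0=1$, $(a)_n=a(a+1)\cdots(a+n-1)$. *)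

theory Defs
  imports "HOL-Analysis.Analysis"
begin

definition hyp2F1 :: "real \<Rightarrow> real \<Rightarrow> real \<Rightarrow> real \<Rightarrow> real" where
  "hyp2F1 a b c x = (\<Sum>n. pochhammer a n * pochhammer b n / pochhammer c n * x ^ n / fact n)"

definition omega :: "real \<Rightarrow> real \<Rightarrow> real \<Rightarrow> real \<Rightarrow> real" where
  "omega c d p r = ((r powr p / (1 + r powr p)) * hyp2F1 c d (c + d) (r powr p / (1 + r powr p))) powr (1 / p)"

end

theory Submission
  imports Defs
begin

definition A :: "real \<Rightarrow> real \<Rightarrow> nat \<Rightarrow> real" where
  "A c d n = pochhammer c n * pochhammer d n / pochhammer (c + d) n / fact n"

lemma A_nonneg: "c > 0 \<Longrightarrow> d > 0 \<Longrightarrow> A c d n \<ge> 0"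
  unfolding A_def by (intro divide_nonneg_nonneg mult_nonneg_nonneg pochhammer_nonneg) auto

lemma A_Suc: "c > 0 \<Longrightarrow> d > 0 \<Longrightarrow>
  A c d (Suc n) = A c d n * ((c + n) * (d + n) / ((c + d + n) * (n + 1)))"
proof -
  assume c: "c > 0" and d: "d > 0"
  have "pochhammer (c+d) n > 0" using c d by (intro pochhammer_pos) auto
  moreover have "c + d + n > 0" using c d by simp
  ultimately show ?thesis
    unfolding A_def by (simp add: pochhammer_Suc fact_Suc field_simps)
qed

lemma A_dec: assumes c: "c > 0" and d: "d > 0" and cd: "c * d \<le> c + d"
  shows "A c d (Suc n) \<le> A c d n"
proof -
  have pos: "(c + d + n) * (n + 1) > 0" using c d by simp
  have "(c + n) * (d + n) \<le> (c + d + n) * (n + 1)"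
    using cd by (simp add: algebra_simps)
  hence "(c + n) * (d + n) / ((c + d + n) * (n + 1)) \<le> 1" using pos by simp
  hence "A c d n * ((c + n) * (d + n) / ((c + d + n) * (n + 1))) \<le> A c d n * 1"
    using A_nonneg[OF c d] by (intro mult_left_mono) auto
  thus ?thesis using A_Suc[OF c d] by simp
qed

lemma A_le1: assumes c: "c > 0" and d: "d > 0" and cd: "c * d \<le> c + d"
  shows "A c d n \<le> 1"
proof (induction n)
  case 0 then show ?case by (simp add: A_def)
next
  case (Suc n) then show ?case using A_dec[OF c d cd, of n] by simp
qed

lemma F_eq: "hyp2F1 c d (c + d) t = (\<Sum>n. A c d n * t ^ n)"
  unfolding hyp2F1_def A_def by simp

lemma A_summable: assumes c: "c > 0" and d: "d > 0" and cd: "c * d \<le> c + d"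
  and t: "0 \<le> t" "t < 1"
  shows "summable (\<lambda>n. A c d n * t ^ n)"
proof (rule summable_comparison_test'[where g = "\<lambda>n. t ^ n" and N = 0])
  show "summable (\<lambda>n. t ^ n)" using t by (intro summable_geometric) auto
  fix n :: nat
  show "norm (A c d n * t ^ n) \<le> t ^ n"
    using A_nonneg[OF c d, of n] A_le1[OF c d cd, of n] t
    by (simp add: abs_mult mult_left_le_one_le)
qed

definition H :: "real \<Rightarrow> real \<Rightarrow> real \<Rightarrow> real" where
  "H c d t = 1 + (\<Sum>n. (A c d (Suc n) - A c d n) * t ^ Suc n)"

lemma H_eq: assumes c: "c > 0" and d: "d > 0" and cd: "c * d \<le> c + d"
  and t: "0 \<le> t" "t < 1"
  shows "(1 - t) * hyp2F1 c d (c + d) t = H c d t"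
proof -
  have s: "summable (\<lambda>n. A c d n * t ^ n)" using A_summable[OF assms] .
  have s1: "summable (\<lambda>n. A c d (Suc n) * t ^ Suc n)"
    using s summable_Suc_iff[of "\<lambda>n. A c d n * t ^ n"] by simp
  have s2: "summable (\<lambda>n. A c d n * t ^ Suc n)"
    using summable_mult[OF s, of t] by (simp add: algebra_simps)
  have e1: "(\<Sum>n. A c d (Suc n) * t ^ Suc n) = (\<Sum>n. A c d n * t ^ n) - 1"
    using suminf_split_head[OF s] by (simp add: A_def)
  have e2: "(\<Sum>n. A c d n * t ^ Suc n) = t * (\<Sum>n. A c d n * t ^ n)"
    using suminf_mult[OF s, of t] by (simp add: algebra_simps)
  have "(\<Sum>n. (A c d (Suc n) - A c d n) * t ^ Suc n)
      = (\<Sum>n. A c d (Suc n) * t ^ Suc n) - (\<Sum>n. A c d n * t ^ Suc n)"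
    using suminf_diff[OF s1 s2] by (simp add: algebra_simps)
  thus ?thesis unfolding H_def F_eq using e1 e2 by (simp add: algebra_simps)
qed

lemma H_mono: assumes c: "c > 0" and d: "d > 0" and cd: "c * d \<le> c + d"
  and st: "0 \<le> s" "s \<le> t" "t < 1"
  shows "H c d t \<le> H c d s"
proof -
  have sm: "summable (\<lambda>n. (A c d (Suc n) - A c d n) * x ^ Suc n)" if "0 \<le> x" "x < 1" for x
  proof -
    have s: "summable (\<lambda>n. A c d n * x ^ n)" using A_summable[OF c d cd that] .
    have s1: "summable (\<lambda>n. A c d (Suc n) * x ^ Suc n)"
      using s summable_Suc_iff[of "\<lambda>n. A c d n * x ^ n"] by simp
    have s2: "summable (\<lambda>n. A c d n * x ^ Suc n)"
      using summable_mult[OF s, of x] by (simp add: algebra_simps)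
    show ?thesis using summable_diff[OF s1 s2] by (simp add: algebra_simps)
  qed
  have "(\<Sum>n. (A c d (Suc n) - A c d n) * t ^ Suc n) \<le> (\<Sum>n. (A c d (Suc n) - A c d n) * s ^ Suc n)"
  proof (rule suminf_le)
    fix n
    have "s ^ Suc n \<le> t ^ Suc n" using st by (intro power_mono) auto
    thus "(A c d (Suc n) - A c d n) * t ^ Suc n \<le> (A c d (Suc n) - A c d n) * s ^ Suc n"
      using A_dec[OF c d cd, of n] by (intro mult_left_mono_neg) auto
  qed (use sm st in auto)
  thus ?thesis unfolding H_def by simp
qed

lemma H_le1: assumes c: "c > 0" and d: "d > 0" and cd: "c * d \<le> c + d"
  and t: "0 \<le> t" "t < 1"
  shows "H c d t \<le> 1"
  using H_mono[OF c d cd, of 0 t] t by (simp add: H_def)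

lemma F_ge1: assumes c: "c > 0" and d: "d > 0" and cd: "c * d \<le> c + d"
  and t: "0 \<le> t" "t < 1"
  shows "hyp2F1 c d (c + d) t \<ge> 1"
proof -
  have s: "summable (\<lambda>n. A c d n * t ^ n)" using A_summable[OF assms] .
  have s1: "summable (\<lambda>n. A c d (Suc n) * t ^ Suc n)"
    using s summable_Suc_iff[of "\<lambda>n. A c d n * t ^ n"] by simp
  have "(\<Sum>n. A c d (Suc n) * t ^ Suc n) \<ge> 0"
    using A_nonneg[OF c d] t by (intro suminf_nonneg[OF s1]) auto
  thus ?thesis unfolding F_eq using suminf_split_head[OF s] by (simp add: A_def)
qed


lemma G_eq: assumes c: "c > 0" and d: "d > 0" and cd: "c * d \<le> c + d" and u: "u \<ge> 0"
  shows "u / (1 + u) * hyp2F1 c d (c + d) (u / (1 + u)) = u * H c d (u / (1 + u))"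
proof -
  have t: "0 \<le> u / (1 + u)" "u / (1 + u) < 1" using u by auto
  have "1 - u / (1 + u) = 1 / (1 + u)" using u by (simp add: field_simps)
  hence "hyp2F1 c d (c + d) (u / (1 + u)) / (1 + u) = H c d (u / (1 + u))"
    using H_eq[OF c d cd t] by simp
  hence "hyp2F1 c d (c + d) (u / (1 + u)) = (1 + u) * H c d (u / (1 + u))"
    using u by (simp add: field_simps)
  thus ?thesis using u by simp
qed

lemma Hq_pos: assumes c: "c > 0" and d: "d > 0" and cd: "c * d \<le> c + d" and u: "u \<ge> 0"
  shows "H c d (u / (1 + u)) > 0"
proof -
  have t: "0 \<le> u / (1 + u)" "u / (1 + u) < 1" using u by auto
  have "(1 - u / (1 + u)) * hyp2F1 c d (c + d) (u / (1 + u)) > 0"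
    using F_ge1[OF c d cd t] t by (intro mult_pos_pos) auto
  thus ?thesis using H_eq[OF c d cd t] by simp
qed

lemma Hq_le1: assumes c: "c > 0" and d: "d > 0" and cd: "c * d \<le> c + d" and u: "u \<ge> 0"
  shows "H c d (u / (1 + u)) \<le> 1"
  using H_le1[OF c d cd] u by auto

lemma Hq_mono: assumes c: "c > 0" and d: "d > 0" and cd: "c * d \<le> c + d"
  and y: "0 \<le> y" "y \<le> x"
  shows "H c d (x / (1 + x)) \<le> H c d (y / (1 + y))"
proof -
  have "y / (1 + y) \<le> x / (1 + x)" using y by (simp add: divide_simps algebra_simps)
  moreover have "x / (1 + x) < 1" using y by auto
  ultimately show ?thesis using H_mono[OF c d cd] y by auto
qed

lemma omega_eq: assumes c: "c > 0" and d: "d > 0" and cd: "c * d \<le> c + d"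
  and r: "0 < r" and p: "p > 0"
  shows "omega c d p r = r * H c d (r powr p / (1 + r powr p)) powr (1 / p)"
proof -
  let ?u = "r powr p"
  have u: "?u \<ge> 0" by simp
  have "omega c d p r = (?u * H c d (?u / (1 + ?u))) powr (1 / p)"
    unfolding omega_def using G_eq[OF c d cd u] by simp
  also have "\<dots> = ?u powr (1/p) * H c d (?u / (1 + ?u)) powr (1 / p)"
    using Hq_pos[OF c d cd u] u by (simp add: powr_mult)
  also have "?u powr (1/p) = r" using r p by (simp add: powr_powr)
  finally show ?thesis .
qed

theorem mainTheorem3:
  fixes c d :: real
  assumes "c > 0" and "d > 0" and "1 / c + 1 / d \<ge> 1"
  shows "(\<forall>r. 0 < r \<and> r < 1 \<longrightarrow> mono_on {0<..} (\<lambda>p. omega c d p r))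
    \<and> (\<forall>r. 0 < r \<and> r < 1 \<longrightarrow>
        sqrt r / (1 + sqrt r) * hyp2F1 c d (c + d) (sqrt r / (1 + sqrt r))
        \<le> (r / (1 + r) * hyp2F1 c d (c + d) (r / (1 + r))) powr (1 / 2))"
proof -
  have c: "c > 0" and d: "d > 0" using assms by auto
  have cd: "c * d \<le> c + d"
  proof -
    have "(1 / c + 1 / d) * (c * d) = c + d" using c d by (simp add: field_simps)
    moreover have "1 * (c * d) \<le> (1 / c + 1 / d) * (c * d)"
      using assms(3) c d by (intro mult_right_mono) auto
    ultimately show ?thesis by simp
  qed
  let ?Q = "\<lambda>u. H c d (u / (1 + u))"
  have part1: "mono_on {0<..} (\<lambda>p. omega c d p r)" if r: "0 < r" "r < 1" for r
  proof (rule mono_onI)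
    fix p q :: real assume p: "p \<in> {0<..}" and q: "q \<in> {0<..}" and pq: "p \<le> q"
    have p0: "p > 0" and q0: "q > 0" using p q by auto
    have rq: "r powr q \<le> r powr p" using r pq by (intro powr_mono') auto
    have Qp: "0 < ?Q (r powr p)" "?Q (r powr p) \<le> 1"
      using Hq_pos[OF c d cd] Hq_le1[OF c d cd] by auto
    have "?Q (r powr p) powr (1/p) \<le> ?Q (r powr p) powr (1/q)"
      using Qp p0 q0 pq by (intro powr_mono') (auto simp: divide_simps)
    also have "\<dots> \<le> ?Q (r powr q) powr (1/q)"
      using Qp q0 Hq_mono[OF c d cd _ rq] by (intro powr_mono2) auto
    finally have "r * ?Q (r powr p) powr (1/p) \<le> r * ?Q (r powr q) powr (1/q)"
      using r by simp
    thus "omega c d p r \<le> omega c d q r"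
      using omega_eq[OF c d cd r(1) p0] omega_eq[OF c d cd r(1) q0] by simp
  qed
  have part2: "sqrt r / (1 + sqrt r) * hyp2F1 c d (c + d) (sqrt r / (1 + sqrt r))
        \<le> (r / (1 + r) * hyp2F1 c d (c + d) (r / (1 + r))) powr (1 / 2)"
    if r: "0 < r" "r < 1" for r
  proof -
    have sr: "sqrt r \<ge> 0" using r by simp
    have s1: "sqrt r \<le> 1" using r by simp
    have "sqrt r * sqrt r \<le> sqrt r * 1" using s1 sr by (intro mult_left_mono)
    hence rs: "r \<le> sqrt r" using r by simp
    have Q1: "0 < ?Q (sqrt r)" "?Q (sqrt r) \<le> 1"
      using Hq_pos[OF c d cd sr] Hq_le1[OF c d cd sr] by auto
    have Q2: "0 < ?Q r"
      using Hq_pos[OF c d cd] r by auto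
    have "?Q (sqrt r) \<le> ?Q r" using Hq_mono[OF c d cd _ rs] r by auto
    moreover have "?Q (sqrt r) * ?Q (sqrt r) \<le> ?Q (sqrt r) * 1"
      using Q1 by (intro mult_left_mono) auto
    ultimately have "?Q (sqrt r) ^ 2 \<le> ?Q r" by (simp add: power2_eq_square)
    hence "?Q (sqrt r) \<le> sqrt (?Q r)" using Q1 by (simp add: real_le_rsqrt)
    hence "sqrt r * ?Q (sqrt r) \<le> sqrt r * sqrt (?Q r)" using sr by (intro mult_left_mono)
    also have "\<dots> = sqrt (r * ?Q r)" by (simp add: real_sqrt_mult)
    finally show ?thesis
      using G_eq[OF c d cd sr] G_eq[OF c d cd, of r] r Q2 by (simp add: powr_half_sqrt)
  qed
  show ?thesis using part1 part2 by blast
qed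

end
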